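(* In the coprime construction of the hider strategy $y$, let $v$ be the first node of a segment. Then $g(v-1)\le y([1,v-1])$ and $g(v+r-1)\le y([1,v-1])+\frac1w$ (i.e., the segment rule holds for $r^*=r$).
   Context: Let $k\ge2$, $n>2^k$, $c=2^k-2$ with $\gcd(c,n-1)=1$, and let $h,w$ be the positive integers with $h(n-1)-wc=1$ and $w\in\{1,\dots,n-2\}$ minimal. Let $g(v)=v\frac{h}{wc}$, $r=\lfloor c/h\rfloor$. For integers $a\le b$, $[a,b]=\{a,\dots,b\}$ (empty if $a>b$), and $y(S)=\sum_{i\in S}y_i$. Construction of $y\in\mathbb{R}^{\{0,\dots,n-1\}}$: $y_0=y_{n-1}=0$; starting at $v=1$, repeatedly choose the largest $r^*\in\{r,r+1\}$ satisfying the segment rule $g(v+r^*-1)\le y([1,v-1])+\frac1w$, set $y_i=\frac{1}{r^*w}$ for $i\in\{v,\dots,v+r^*-1\}$ (the set $\{v,\dots,v+r^*-1\}$ is called a segment, with first node $v$), and replace $v$ by $v+r^*$; stop when $v>n-2$. *)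

theory Defs
  imports Complex_Main
begin

definition gfun :: "nat \<Rightarrow> nat \<Rightarrow> nat \<Rightarrow> real \<Rightarrow> real" where
  "gfun c h w v = v * real h / (real w * real c)"

definition rr :: "nat \<Rightarrow> nat \<Rightarrow> nat" where
  "rr c h = nat \<lfloor>real c / real h\<rfloor>"

text \<open>State of the construction after j segment steps: the next first node v and the
  values y assigned so far (all other entries 0).\<close>
primrec seg_state :: "nat \<Rightarrow> nat \<Rightarrow> nat \<Rightarrow> nat \<Rightarrow> nat \<Rightarrow> nat \<times> (nat \<Rightarrow> real)" where
  "seg_state n c h w 0 = (1, \<lambda>i. 0)"
| "seg_state n c h w (Suc j) =
     (let (v, y) = seg_state n c h w j in
      if v > n - 2 then (v, y)
      else
        (let S = (\<Sum>i\<in>{1..v-1}. y i);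
             rs = (if gfun c h w (real (v + (rr c h + 1) - 1)) \<le> S + 1 / real w
                   then rr c h + 1 else rr c h)
         in (v + rs, \<lambda>i. if v \<le> i \<and> i \<le> v + rs - 1 then 1 / (real rs * real w) else y i)))"

text \<open>The final hider strategy y on nodes {0..n-1}; y_0 = y_{n-1} = 0.
  The process stops after at most n steps since each step advances v by r* \<ge> 1.\<close>
definition hider_y :: "nat \<Rightarrow> nat \<Rightarrow> nat \<Rightarrow> nat \<Rightarrow> nat \<Rightarrow> real" where
  "hider_y n c h w i = (if i = 0 \<or> i \<ge> n - 1 then 0 else snd (seg_state n c h w n) i)"

definition seg_first :: "nat \<Rightarrow> nat \<Rightarrow> nat \<Rightarrow> nat \<Rightarrow> nat \<Rightarrow> bool" where
  "seg_first n c h w v \<longleftrightarrow> (\<exists>j. v = fst (seg_state n c h w j) \<and> v \<le> n - 2)"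

end

theory Submission
  imports Defs
begin

lemma ss_suc:
  assumes "seg_state n c h w j = (v, y)"
  shows "seg_state n c h w (Suc j) =
     (if v > n - 2 then (v, y) else
       (let rs = (if gfun c h w (real (v + (rr c h + 1) - 1)) \<le> (\<Sum>i\<in>{1..v-1}. y i) + 1 / real w
                   then rr c h + 1 else rr c h)
        in (v + rs, \<lambda>i. if v \<le> i \<and> i \<le> v + rs - 1 then 1 / (real rs * real w) else y i)))"
  using assms by (simp add: Let_def)

lemma ss_v1: "fst (seg_state n c h w j) \<ge> 1"
proof (induction j)
  case 0 then show ?case by simp
next
  case (Suc j)
  obtain v y where e: "seg_state n c h w j = (v, y)" by fastforce
  show ?case using Suc e by (simp add: ss_suc[OF e] Let_def)
qed

lemma ss_mono1: "fst (seg_state n c h w j) \<le> fst (seg_state n c h w (Suc j))"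
proof -
  obtain v y where e: "seg_state n c h w j = (v, y)" by fastforce
  show ?thesis using e by (simp add: ss_suc[OF e] Let_def)
qed

lemma ss_stable1:
  assumes "i < fst (seg_state n c h w j)"
  shows "snd (seg_state n c h w (Suc j)) i = snd (seg_state n c h w j) i"
proof -
  obtain v y where e: "seg_state n c h w j = (v, y)" by fastforce
  show ?thesis using e assms by (simp add: ss_suc[OF e] Let_def)
qed

lemma ss_stable:
  assumes "i < fst (seg_state n c h w j)"
  shows "snd (seg_state n c h w (j + d)) i = snd (seg_state n c h w j) i
         \<and> fst (seg_state n c h w j) \<le> fst (seg_state n c h w (j + d))"
proof (induction d)
  case 0 then show ?case by simp
next
  case (Suc d)
  have "i < fst (seg_state n c h w (j + d))" using Suc assms by linarith
  then show ?case using Suc ss_stable1[of i n c h w "j+d"] ss_mono1[of n c h w "j+d"] by simp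
qed

lemma ss_grow:
  assumes "rr c h \<ge> 1"
  shows "fst (seg_state n c h w j) \<ge> j + 1 \<or> fst (seg_state n c h w j) > n - 2"
proof (induction j)
  case 0 then show ?case by simp
next
  case (Suc j)
  obtain v y where e: "seg_state n c h w j = (v, y)" by fastforce
  show ?case using Suc e assms by (auto simp add: ss_suc[OF e] Let_def)
qed

lemma g_step:
  assumes "c > 0" "h > 0" "w \<ge> 1" "v \<ge> 1"
    and "gfun c h w (real (v - 1)) \<le> S"
  shows "gfun c h w (real (v + rr c h - 1)) \<le> S + 1 / real w"
proof -
  have "real (rr c h) \<le> real c / real h"
    unfolding rr_def using assms by simp
  hence rh: "real (rr c h) * real h \<le> real c" using assms by (simp add: field_simps)
  have "gfun c h w (real (v + rr c h - 1)) = gfun c h w (real (v - 1)) + real (rr c h) * real h / (real w * real c)"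
    unfolding gfun_def using assms by (simp add: of_nat_diff add_divide_distrib[symmetric] algebra_simps)
  also have "real (rr c h) * real h / (real w * real c) \<le> real c / (real w * real c)"
    using rh assms by (intro divide_right_mono) auto
  also have "real c / (real w * real c) = 1 / real w" using assms by simp
  finally show ?thesis using assms by linarith
qed

lemma ss_inv:
  assumes "c > 0" "h > 0" "w \<ge> 1"
  shows "gfun c h w (real (fst (seg_state n c h w j) - 1))
     \<le> (\<Sum>i\<in>{1..fst (seg_state n c h w j) - 1}. snd (seg_state n c h w j) i)"
proof (induction j)
  case 0 then show ?case by (simp add: gfun_def)
next
  case (Suc j)
  obtain v y where e: "seg_state n c h w j = (v, y)" by fastforce
  have v1: "v \<ge> 1" using ss_v1[of n c h w j] e by simp
  have IH: "gfun c h w (real (v - 1)) \<le> (\<Sum>i\<in>{1..v-1}. y i)" using Suc e by simp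
  show ?case
  proof (cases "v > n - 2")
    case True then show ?thesis using IH unfolding ss_suc[OF e] by simp
  next
    case False
    define S where "S = (\<Sum>i\<in>{1..v-1}. y i)"
    define rs where "rs = (if gfun c h w (real (v + (rr c h + 1) - 1)) \<le> S + 1 / real w
                   then rr c h + 1 else rr c h)"
    have st: "seg_state n c h w (Suc j) = (v + rs, \<lambda>i. if v \<le> i \<and> i \<le> v + rs - 1 then 1 / (real rs * real w) else y i)"
      unfolding ss_suc[OF e] if_not_P[OF False] Let_def S_def[symmetric] rs_def[symmetric] by (rule refl)
    have grs: "gfun c h w (real (v + rs - 1)) \<le> S + 1 / real w"
    proof (cases "gfun c h w (real (v + (rr c h + 1) - 1)) \<le> S + 1 / real w")
      case True then show ?thesis by (simp add: rs_def)
    next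
      case F: False
      then have "rs = rr c h" by (simp add: rs_def)
      then show ?thesis using g_step[OF assms v1, of S] IH S_def by simp
    qed
    have split: "{1..v + rs - 1} = {1..v-1} \<union> {v..v+rs-1}" using v1 by auto
    have sum_eq: "(\<Sum>i\<in>{1..v + rs - 1}. (if v \<le> i \<and> i \<le> v + rs - 1 then 1 / (real rs * real w) else y i))
        = S + (\<Sum>i\<in>{v..v+rs-1}. 1 / (real rs * real w))"
      unfolding split S_def
      by (subst sum.union_disjoint) (auto intro!: sum.cong)
    have card: "card {v..v+rs-1} = rs" using v1 by auto
    have "(\<Sum>i\<in>{v..v+rs-1}. 1 / (real rs * real w)) = (if rs = 0 then 0 else 1 / real w)"
      using card assms by simp
    then show ?thesis
    proof (cases "rs = 0")
      case True
      then show ?thesis using st sum_eq IH S_def v1 by simp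
    next
      case False
      then show ?thesis using st sum_eq grs \<open>(\<Sum>i\<in>{v..v+rs-1}. 1 / (real rs * real w)) = _\<close> by simp
    qed
  qed
qed

theorem lemma3p4:
  fixes k n h w v :: nat
  defines "c \<equiv> 2 ^ k - 2"
  assumes hk: "k \<ge> 2"
    and hn: "n > 2 ^ k"
    and hcop: "coprime c (n - 1)"
    and hpos: "h > 0" "w \<ge> 1" "w \<le> n - 2"
    and heq: "int h * int (n - 1) - int w * int c = 1"
    and hmin: "\<And>w' h'. h' > 0 \<Longrightarrow> 1 \<le> w' \<Longrightarrow> w' \<le> n - 2 \<Longrightarrow>
                 int h' * int (n - 1) - int w' * int c = 1 \<Longrightarrow> w \<le> w'"
    and hv: "seg_first n c h w v"
  shows "gfun c h w (real (v - 1)) \<le> (\<Sum>i\<in>{1..v-1}. hider_y n c h w i)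
       \<and> gfun c h w (real (v + rr c h - 1)) \<le> (\<Sum>i\<in>{1..v-1}. hider_y n c h w i) + 1 / real w"
proof -
  have "(2::nat) ^ k \<ge> 2 ^ 2" using hk by (intro power_increasing) auto
  hence c2: "c \<ge> 2" unfolding c_def by simp
  have hc: "h \<le> c"
  proof (rule ccontr)
    assume "\<not> h \<le> c"
    hence "int h \<ge> int c + 1" by simp
    hence "int h * int (n - 1) \<ge> (int c + 1) * int (n - 1)" by (intro mult_right_mono) auto
    moreover have "int w \<le> int (n - 1) - 1" using hpos by simp
    hence "int w * int c \<le> (int (n - 1) - 1) * int c" by (intro mult_right_mono) auto
    ultimately show False using heq c2 hn by (simp add: algebra_simps)
  qed
  have r1: "rr c h \<ge> 1"
  proof -
    have "real c / real h \<ge> 1" using hc hpos by simp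
    thus ?thesis unfolding rr_def by linarith
  qed
  obtain j where vj: "v = fst (seg_state n c h w j)" and vn: "v \<le> n - 2"
    using hv unfolding seg_first_def by blast
  have jn: "j \<le> n" using ss_grow[OF r1, where n=n and w=w and j=j] vj vn by linarith
  have v1: "v \<ge> 1" using ss_v1[of n c h w j] vj by simp
  have "(\<Sum>i\<in>{1..v-1}. hider_y n c h w i) = (\<Sum>i\<in>{1..v-1}. snd (seg_state n c h w j) i)"
  proof (rule sum.cong)
    fix i assume i: "i \<in> {1..v-1}"
    have "i < fst (seg_state n c h w j)" using i vj v1 by auto
    from ss_stable[OF this, of "n - j"] jn
    have "snd (seg_state n c h w n) i = snd (seg_state n c h w j) i" by simp
    moreover have "\<not> (i = 0 \<or> i \<ge> n - 1)" using i vn v1 by auto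
    ultimately show "hider_y n c h w i = snd (seg_state n c h w j) i"
      unfolding hider_y_def by simp
  qed simp
  moreover have "gfun c h w (real (v - 1)) \<le> (\<Sum>i\<in>{1..v-1}. snd (seg_state n c h w j) i)"
    using ss_inv[of c h w n j] c2 hpos vj by simp
  ultimately show ?thesis using g_step[of c h w v] c2 hpos v1 by simp
qed

end
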